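(* Let $(Q,\rightarrow)$ be a finite transition system, $\mathscr{R}$ a preorder on $Q$ and $\mathscr{P}\subseteq\mathscr{R}$ an equivalence relation with a representative $E.\mathrm{rep}\in E$ fixed for each block $E$ of $\mathscr{P}$. Assume there is no $(\mathscr{P},\mathscr{R})$-splitter transition of type 1, and let $E\rightarrow B$ be a $(\mathscr{P},\mathscr{R})$-splitter transition of type 2. Let $P'=\mathrm{Split}(P_{\mathscr{P}},E\cap\rightarrow^{-1}(B))$. Then $\mathscr{P}_{P'}$ is strictly included in $\mathscr{P}$ and contains every $\mathscr{R}$-block-stable equivalence relation included in $\mathscr{P}$.
   Context: A preorder is a reflexive transitive relation; its blocks are $[q]_{\mathscr{R}}=\{q'\mid q\,\mathscr{R}\,q'\wedge q'\,\mathscr{R}\,q\}$. $\mathscr{R}(X)=\{q'\mid\exists q\in X.\ q\,\mathscr{R}\,q'\}$, $\rightarrow^{-1}(Y)=\{q\mid\exists y\in Y.\ q\rightarrow y\}$; for sets, $X\rightarrow Y$ means some $x\in X,y\in Y$ have $x\rightarrow y$, and $X\,\mathscr{R}\,Y$ means $(X\times Y)\cap\mathscr{R}\neq\emptyset$. $P_{\mathscr{P}}$ is the partition into blocks of $\mathscr{P}$; $\mathscr{P}_P=\bigcup_{E\in P}E\times E$. For a block $E$ of $\mathscr{P}$ and a block $B$ of $\mathscr{R}$, $\mathrm{RelCount}_{(\mathscr{P},\mathscr{R})}(E,B)=|\{E'\in P_{\mathscr{P}}\mid E.\mathrm{rep}\rightarrow E'\wedge B\,\mathscr{R}\,E'\}|$.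 A $(\mathscr{P},\mathscr{R})$-splitter transition of type 1 is a pair ($E$ block of $\mathscr{P}$, $B$ block of $\mathscr{R}$) with $E\rightarrow B$ and $\mathrm{RelCount}_{(\mathscr{P},\mathscr{R})}(E,B)=0$. A $(\mathscr{P},\mathscr{R})$-splitter transition of type 2 is a pair ($E$, $B$) with $E.\mathrm{rep}\rightarrow B$, $\mathrm{RelCount}_{(\mathscr{P},\mathscr{R})}(E,B)=|\{[b]_{\mathscr{P}}\subseteq B\mid E.\mathrm{rep}\rightarrow b\}|$, and $E\not\subseteq\rightarrow^{-1}(B)$. $\mathrm{Split}(P,M)$ replaces each block $E$ of $P$ with $E\cap M\neq\emptyset$ and $E\not\subseteq M$ by $E\cap M$ and $E\setminus M$. An equivalence relation $\mathscr{P}''\subseteq\mathscr{R}$ is $\mathscr{R}$-block-stable if for all $b,d,d'$ with $d\,\mathscr{P}''\,d'$: $d\in\rightarrow^{-1}(\mathscr{R}(b))\iff d'\in\rightarrow^{-1}(\mathscr{R}(b))$. *)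

theory Defs
  imports Main
begin

definition rblock :: "('a \<times> 'a) set \<Rightarrow> 'a \<Rightarrow> 'a set" where
  "rblock R q = {q'. (q, q') \<in> R \<and> (q', q) \<in> R}"

definition rblocks :: "'a set \<Rightarrow> ('a \<times> 'a) set \<Rightarrow> 'a set set" where
  "rblocks Q R = {rblock R q | q. q \<in> Q}"

definition pre :: "('a \<times> 'a) set \<Rightarrow> 'a set \<Rightarrow> 'a set" where
  "pre T Y = {q. \<exists>y\<in>Y. (q, y) \<in> T}"

definition set_trans :: "('a \<times> 'a) set \<Rightarrow> 'a set \<Rightarrow> 'a set \<Rightarrow> bool" where
  "set_trans T X Y \<longleftrightarrow> (\<exists>x\<in>X. \<exists>y\<in>Y. (x, y) \<in> T)"

definition set_rel :: "('a \<times> 'a) set \<Rightarrow> 'a set \<Rightarrow> 'a set \<Rightarrow> bool" where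
  "set_rel R X Y \<longleftrightarrow> (X \<times> Y) \<inter> R \<noteq> {}"

definition RelCount :: "'a set \<Rightarrow> ('a \<times> 'a) set \<Rightarrow> ('a \<times> 'a) set \<Rightarrow> ('a \<times> 'a) set
    \<Rightarrow> ('a set \<Rightarrow> 'a) \<Rightarrow> 'a set \<Rightarrow> 'a set \<Rightarrow> nat" where
  "RelCount Q T P R rep E B =
     card {E' \<in> Q // P. set_trans T {rep E} E' \<and> set_rel R B E'}"

definition splitter1 :: "'a set \<Rightarrow> ('a \<times> 'a) set \<Rightarrow> ('a \<times> 'a) set \<Rightarrow> ('a \<times> 'a) set
    \<Rightarrow> ('a set \<Rightarrow> 'a) \<Rightarrow> 'a set \<Rightarrow> 'a set \<Rightarrow> bool" where
  "splitter1 Q T P R rep E B \<longleftrightarrow>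
     E \<in> Q // P \<and> B \<in> rblocks Q R \<and> set_trans T E B \<and> RelCount Q T P R rep E B = 0"

definition splitter2 :: "'a set \<Rightarrow> ('a \<times> 'a) set \<Rightarrow> ('a \<times> 'a) set \<Rightarrow> ('a \<times> 'a) set
    \<Rightarrow> ('a set \<Rightarrow> 'a) \<Rightarrow> 'a set \<Rightarrow> 'a set \<Rightarrow> bool" where
  "splitter2 Q T P R rep E B \<longleftrightarrow>
     E \<in> Q // P \<and> B \<in> rblocks Q R \<and> set_trans T {rep E} B \<and>
     RelCount Q T P R rep E B =
       card {P `` {b} | b. b \<in> Q \<and> P `` {b} \<subseteq> B \<and> (rep E, b) \<in> T} \<and>
     \<not> E \<subseteq> pre T B"

definition Split :: "'a set set \<Rightarrow> 'a set \<Rightarrow> 'a set set" where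
  "Split Part M =
     {E \<in> Part. E \<inter> M = {} \<or> E \<subseteq> M}
     \<union> {E \<inter> M | E. E \<in> Part \<and> E \<inter> M \<noteq> {} \<and> \<not> E \<subseteq> M}
     \<union> {E - M | E. E \<in> Part \<and> E \<inter> M \<noteq> {} \<and> \<not> E \<subseteq> M}"

definition rel_of_part :: "'a set set \<Rightarrow> ('a \<times> 'a) set" where
  "rel_of_part Part = (\<Union>E\<in>Part. E \<times> E)"

(* R-block-stability of a relation P'' (equivalence and inclusion in R are stated separately) *)
definition block_stable :: "('a \<times> 'a) set \<Rightarrow> ('a \<times> 'a) set \<Rightarrow> ('a \<times> 'a) set \<Rightarrow> bool" where
  "block_stable T R P'' \<longleftrightarrow>
     (\<forall>b d d'. (d, d') \<in> P'' \<longrightarrow> (d \<in> pre T (R `` {b}) \<longleftrightarrow> d' \<in> pre T (R `` {b})))"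

end

theory Submission
  imports Defs
begin

theorem lemma6:
  fixes Q :: "'a set" and T R P :: "('a \<times> 'a) set" and rep :: "'a set \<Rightarrow> 'a"
    and E B :: "'a set"
  assumes "finite Q" and "T \<subseteq> Q \<times> Q"
    and "R \<subseteq> Q \<times> Q" and "refl_on Q R" and "trans R"
    and "equiv Q P" and "P \<subseteq> R"
    and "\<forall>C \<in> Q // P. rep C \<in> C"
    and "\<not> (\<exists>E' B'. splitter1 Q T P R rep E' B')"
    and "splitter2 Q T P R rep E B"
  shows "rel_of_part (Split (Q // P) (E \<inter> pre T B)) \<subset> P \<and>
         (\<forall>P''. equiv Q P'' \<and> P'' \<subseteq> P \<and> block_stable T R P''
                 \<longrightarrow> P'' \<subseteq> rel_of_part (Split (Q // P) (E \<inter> pre T B)))"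
proof -
  note eq = assms(6)
  have EQ: "E \<in> Q // P" and BR: "B \<in> rblocks Q R" and rt: "set_trans T {rep E} B"
    and cnt: "RelCount Q T P R rep E B =
       card {P `` {b} | b. b \<in> Q \<and> P `` {b} \<subseteq> B \<and> (rep E, b) \<in> T}"
    and nsub: "\<not> E \<subseteq> pre T B"
    using assms(10) unfolding splitter2_def by auto
  obtain b0 where b0Q: "b0 \<in> Q" and Bdef: "B = rblock R b0"
    using BR unfolding rblocks_def by auto
  have repE: "rep E \<in> E" using assms(8) EQ by auto
  have EsubQ: "E \<subseteq> Q" using EQ eq by (meson in_quotient_imp_subset)
  define LHS where "LHS = {E' \<in> Q // P. set_trans T {rep E} E' \<and> set_rel R B E'}"
  define RHS where "RHS = {P `` {b} | b. b \<in> Q \<and> P `` {b} \<subseteq> B \<and> (rep E, b) \<in> T}"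
  have finQP: "finite (Q // P)"
    using assms(1) eq by (meson finite_Pow_iff finite_subset in_quotient_imp_subset PowI subsetI)
  have "RHS \<subseteq> LHS"
  proof
    fix X assume "X \<in> RHS"
    then obtain b where X: "X = P``{b}" "b \<in> Q" "P``{b} \<subseteq> B" "(rep E, b) \<in> T"
      unfolding RHS_def by auto
    have bX: "b \<in> X" using X eq equiv_class_self by metis
    have "(b,b) \<in> R" using assms(4) X(2) by (simp add: refl_onD)
    moreover have "b \<in> B" using bX X by auto
    ultimately show "X \<in> LHS" unfolding LHS_def set_trans_def set_rel_def
      using X bX by (auto intro: quotientI)
  qed
  moreover have "card LHS = card RHS" using cnt unfolding RelCount_def LHS_def RHS_def .
  moreover have "finite LHS" using finQP unfolding LHS_def by auto
  ultimately have LR: "LHS = RHS" by (metis card_subset_eq)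
  have Bsub: "B \<subseteq> R``{b0}" unfolding Bdef rblock_def by auto
  have A: "s \<in> B" if d: "d \<in> E" and ds: "(d,s) \<in> T" and bs: "(b0,s) \<in> R" for d s
  proof (rule ccontr)
    assume sB: "s \<notin> B"
    have sQ: "s \<in> Q" using ds assms(2) by auto
    have "set_trans T E (rblock R s)"
      proof -
      have "(s,s) \<in> R" using assms(4) sQ by (simp add: refl_onD)
      thus ?thesis unfolding set_trans_def rblock_def using d ds by blast
    qed
    moreover have "rblock R s \<in> rblocks Q R" unfolding rblocks_def using sQ by auto
    ultimately have "RelCount Q T P R rep E (rblock R s) \<noteq> 0"
      using assms(9) EQ unfolding splitter1_def by metis
    then obtain E'' where E'': "E'' \<in> Q // P" "set_trans T {rep E} E''"
        "set_rel R (rblock R s) E''"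
      unfolding RelCount_def by (metis (no_types, lifting) card.empty empty_Collect_eq)
    obtain e' where e': "e' \<in> E''" "(rep E, e') \<in> T" using E''(2) unfolding set_trans_def by auto
    obtain x e where xe: "x \<in> rblock R s" "e \<in> E''" "(x,e) \<in> R"
      using E''(3) unfolding set_rel_def by auto
    have "(e,e') \<in> P" using E''(1) xe(2) e'(1) eq by (meson quotient_eq_iff)
    hence "(e,e') \<in> R" using assms(7) by auto
    have "(s,x) \<in> R" using xe(1) unfolding rblock_def by auto
    hence se': "(s,e') \<in> R" using xe(3) \<open>(e,e') \<in> R\<close> assms(5) by (meson transD)
    have "set_rel R B E''" unfolding set_rel_def
    proof -
      have "b0 \<in> B" unfolding Bdef rblock_def using assms(4) b0Q by (auto simp: refl_onD)
      moreover have "(b0,e') \<in> R" using bs se' assms(5) by (meson transD)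
      ultimately show "B \<times> E'' \<inter> R \<noteq> {}" using e'(1) by auto
    qed
    hence "E'' \<in> LHS" unfolding LHS_def using E'' by auto
    hence "E'' \<in> RHS" using LR by simp
    then obtain b where "E'' = P``{b}" "P``{b} \<subseteq> B" unfolding RHS_def by auto
    hence "e' \<in> B" using e' by auto
    hence "(e',b0) \<in> R" unfolding Bdef rblock_def by auto
    hence "(s,b0) \<in> R" using se' assms(5) by (meson transD)
    hence "s \<in> B" using bs unfolding Bdef rblock_def by auto
    thus False using sB by simp
  qed
  have C: "d \<in> pre T B \<longleftrightarrow> d \<in> pre T (R``{b0})" if "d \<in> E" for d
    using A[OF that] Bsub unfolding pre_def by auto
  define M where "M = E \<inter> pre T B"
  have repM: "rep E \<in> M"
    using rt repE unfolding M_def pre_def set_trans_def by auto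
  obtain y where y: "y \<in> E" "y \<notin> M" using nsub unfolding M_def pre_def by auto
  have EinM: "E \<inter> M \<noteq> {}" "\<not> E \<subseteq> M" using repM repE y by auto
  have disjE: "F \<inter> E = {}" if "F \<in> Q//P" "F \<noteq> E" for F
    using that EQ eq by (meson quotient_disj)
  have partsub: "\<exists>F \<in> Q//P. X \<subseteq> F" if "X \<in> Split (Q//P) M" for X
    using that unfolding Split_def by auto
  have sub: "rel_of_part (Split (Q // P) M) \<subseteq> P"
  proof
    fix p assume "p \<in> rel_of_part (Split (Q // P) M)"
    then obtain X a c where X: "X \<in> Split (Q//P) M" "p = (a,c)" "a \<in> X" "c \<in> X"
      unfolding rel_of_part_def by auto
    obtain F where "F \<in> Q//P" "X \<subseteq> F" using partsub[OF X(1)] by auto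
    thus "p \<in> P" using X eq by (meson quotient_eq_iff subsetD)
  qed
  have xyP: "(rep E, y) \<in> P" using EQ repE y(1) eq by (meson quotient_eq_iff)
  have xyN: "(rep E, y) \<notin> rel_of_part (Split (Q // P) M)"
  proof
    assume "(rep E, y) \<in> rel_of_part (Split (Q // P) M)"
    then obtain X where X: "X \<in> Split (Q//P) M" "rep E \<in> X" "y \<in> X"
      unfolding rel_of_part_def by auto
    show False using X(1) unfolding Split_def
    proof (elim UnE)
      assume "X \<in> {E \<in> Q // P. E \<inter> M = {} \<or> E \<subseteq> M}"
      hence "X \<in> Q//P" "X \<inter> M = {} \<or> X \<subseteq> M" by auto
      moreover have "X = E" using disjE[OF \<open>X \<in> Q//P\<close>] X(2) repE by auto
      ultimately show False using EinM by auto
    next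
      assume "X \<in> {E \<inter> M |E. E \<in> Q // P \<and> E \<inter> M \<noteq> {} \<and> \<not> E \<subseteq> M}"
      thus False using X(3) y(2) by auto
    next
      assume "X \<in> {E - M |E. E \<in> Q // P \<and> E \<inter> M \<noteq> {} \<and> \<not> E \<subseteq> M}"
      thus False using X(2) repM by auto
    qed
  qed
  have part2: "P'' \<subseteq> rel_of_part (Split (Q // P) M)"
    if "equiv Q P''" "P'' \<subseteq> P" "block_stable T R P''" for P''
  proof
    fix p assume "p \<in> P''"
    then obtain d d' where p: "p = (d,d')" "(d,d') \<in> P''" by (cases p) auto
    hence dP: "(d,d') \<in> P" using that by auto
    define F where "F = P``{d}"
    have FQ: "F \<in> Q//P" unfolding F_def using dP eq
      by (meson equiv_class_eq_iff quotientI)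
    have dF: "d \<in> F" "d' \<in> F" unfolding F_def using dP eq
      by (auto dest: equiv_class_eq_iff[THEN iffD1]) (meson equiv_class_eq_iff equiv_def refl_onD UNIV_I)
    show "p \<in> rel_of_part (Split (Q // P) M)"
    proof (cases "F = E")
      case True
      have st: "d \<in> pre T (R``{b0}) \<longleftrightarrow> d' \<in> pre T (R``{b0})"
        using that(3) p(2) unfolding block_stable_def by blast
      have "d \<in> M \<longleftrightarrow> d' \<in> M" using C dF True st unfolding M_def by auto
      moreover have "E \<inter> M \<in> Split (Q//P) M" "E - M \<in> Split (Q//P) M"
        unfolding Split_def using EQ EinM by blast+
      ultimately show ?thesis using dF True p unfolding rel_of_part_def by blast
    next
      case False
      hence "F \<inter> M = {}" using disjE[OF FQ] unfolding M_def by auto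
      hence "F \<in> Split (Q//P) M" unfolding Split_def using FQ by blast
      thus ?thesis using dF p unfolding rel_of_part_def by blast
    qed
  qed
  show ?thesis using sub xyP xyN part2 unfolding M_def by blast
qed

end
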